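(* Let $\beta_{\mathtt{H}},\beta_{\mathtt{L}},\gamma_{\mathtt{H}},\gamma_{\mathtt{L}}>0$ with $\beta_{\mathtt{H}}/\gamma_{\mathtt{H}}>\beta_{\mathtt{L}}/\gamma_{\mathtt{L}}$ and $\beta_{\mathtt{H}}>\beta_{\mathtt{L}}$, let $q_{\mathtt{HL}},q_{\mathtt{LH}}\ge 0$, $\alpha\in(0,1)$, and for $z_{\mathtt{S}}\in[0,1]$ set $\hat\beta_{\mathtt{Q}}(z_{\mathtt{S}}):=\beta_{\mathtt{Q}}(\alpha z_{\mathtt{S}}+1-z_{\mathtt{S}})$ for $\mathtt{Q}\in\{\mathtt{H},\mathtt{L}\}$. Suppose that for each $z_{\mathtt{S}}\in[0,1]$ the system \begin{align*} \dot{\mathtt{I}}_{\mathtt{H}}&=\hat\beta_{\mathtt{H}}(z_{\mathtt{S}})\mathtt{I}_{\mathtt{H}}(1-\mathtt{I}_{\mathtt{H}}-\mathtt{I}_{\mathtt{L}})+q_{\mathtt{LH}}\mathtt{I}_{\mathtt{L}}-(q_{\mathtt{HL}}+\gamma_{\mathtt{H}})\mathtt{I}_{\mathtt{H}},\\ \dot{\mathtt{I}}_{\mathtt{L}}&=\hat\beta_{\mathtt{L}}(z_{\mathtt{S}})\mathtt{I}_{\mathtt{L}}(1-\mathtt{I}_{\mathtt{H}}-\mathtt{I}_{\mathtt{L}})+q_{\mathtt{HL}}\mathtt{I}_{\mathtt{H}}-(q_{\mathtt{LH}}+\gamma_{\mathtt{L}})\mathtt{I}_{\mathtt{L}} \end{align*}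 has an endemic equilibrium $(\mathtt{I}^\star_{\mathtt{H}}(z_{\mathtt{S}}),\mathtt{I}^\star_{\mathtt{L}}(z_{\mathtt{S}}))\in(0,1)^2$. Then $\mathtt{I}^\star_{\mathtt{H}}(z_{\mathtt{S}})$ and $\mathtt{I}^\star_{\mathtt{L}}(z_{\mathtt{S}})$ are monotonically decreasing in $z_{\mathtt{S}}$.
   Context: Bi-virus SIS model with strains $\mathtt{H},\mathtt{L}$: $\mathtt{I}_{\mathtt{H}},\mathtt{I}_{\mathtt{L}}$ are infected fractions, $\beta$'s transmission rates, $\gamma$'s recovery rates, $q_{\mathtt{HL}},q_{\mathtt{LH}}$ mutation rates, $z_{\mathtt{S}}$ fraction of susceptibles adopting protection, protection scaling infection rates by $\alpha$. *)

theory Defs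
  imports Complex_Main
begin

definition beta_hat :: "real \<Rightarrow> real \<Rightarrow> real \<Rightarrow> real" where
  "beta_hat \<alpha> \<beta> zS = \<beta> * (\<alpha> * zS + 1 - zS)"

definition fH :: "real \<Rightarrow> real \<Rightarrow> real \<Rightarrow> real \<Rightarrow> real \<Rightarrow> real \<Rightarrow> real \<Rightarrow> real \<Rightarrow> real" where
  "fH \<alpha> \<beta>H \<gamma>H qHL qLH zS IH IL =
     beta_hat \<alpha> \<beta>H zS * IH * (1 - IH - IL) + qLH * IL - (qHL + \<gamma>H) * IH"

definition fL :: "real \<Rightarrow> real \<Rightarrow> real \<Rightarrow> real \<Rightarrow> real \<Rightarrow> real \<Rightarrow> real \<Rightarrow> real \<Rightarrow> real" where
  "fL \<alpha> \<beta>L \<gamma>L qHL qLH zS IH IL =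
     beta_hat \<alpha> \<beta>L zS * IL * (1 - IH - IL) + qHL * IH - (qLH + \<gamma>L) * IL"

definition endemic_eq :: "real \<Rightarrow> real \<Rightarrow> real \<Rightarrow> real \<Rightarrow> real \<Rightarrow> real \<Rightarrow> real \<Rightarrow> real \<Rightarrow> real \<Rightarrow> real \<Rightarrow> bool" where
  "endemic_eq \<alpha> \<beta>H \<beta>L \<gamma>H \<gamma>L qHL qLH zS IH IL \<longleftrightarrow>
     IH \<in> {0<..<1} \<and> IL \<in> {0<..<1} \<and>
     fH \<alpha> \<beta>H \<gamma>H qHL qLH zS IH IL = 0 \<and>
     fL \<alpha> \<beta>L \<gamma>L qHL qLH zS IH IL = 0"

end

theory Submission
  imports Defs
begin

lemma key_props:
  fixes a b qHL qLH IH IL :: real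
  assumes e1: "a*IH + qLH*IL = 0" and e2: "qHL*IH + b*IL = 0"
    and p: "IH > 0" "IL > 0" "qHL \<ge> 0" "qLH \<ge> 0"
  shows "a \<le> 0" "b \<le> 0" "a*b = qHL*qLH"
proof -
  have "a*IH \<le> 0" using e1 p by (smt (verit) mult_nonneg_nonneg)
  then show "a \<le> 0" using p by (simp add: mult_le_0_iff)
  have "b*IL \<le> 0" using e2 p by (smt (verit) mult_nonneg_nonneg)
  then show "b \<le> 0" using p by (simp add: mult_le_0_iff)
  have "(a*IH)*(b*IL) = (qLH*IL)*(qHL*IH)"
    using e1 e2 by (metis add_eq_0_iff equation_minus_iff mult_minus_left mult_minus_right minus_mult_minus)
  then have "(a*b)*(IH*IL) = (qHL*qLH)*(IH*IL)" by (simp add: algebra_simps)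
  then show "a*b = qHL*qLH" using p by simp
qed

lemma prod_strict:
  fixes a1 a2 b1 b2 :: real
  assumes "a1 < a2" "a2 \<le> 0" "b1 < b2" "b2 \<le> 0"
  shows "a2*b2 < a1*b1"
proof -
  have "a2*b2 \<le> a2*b1" using assms by (simp add: mult_left_mono_neg)
  also have "\<dots> < a1*b1" using assms by (simp add: mult_strict_right_mono_neg)
  finally show ?thesis .
qed

lemma x_unique:
  fixes x1 x2 bH bL gH gL qHL qLH :: real
  assumes "bH > 0" "bL > 0"
    and "bH*x1 - qHL - gH \<le> 0" "bL*x1 - qLH - gL \<le> 0"
    and "(bH*x1 - qHL - gH)*(bL*x1 - qLH - gL) = qHL*qLH"
    and "bH*x2 - qHL - gH \<le> 0" "bL*x2 - qLH - gL \<le> 0"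
    and "(bH*x2 - qHL - gH)*(bL*x2 - qLH - gL) = qHL*qLH"
  shows "x1 = x2"
proof (rule ccontr)
  assume ne: "x1 \<noteq> x2"
  show False
  proof (cases "x1 < x2")
    case True
    have "(bH*x2 - qHL - gH)*(bL*x2 - qLH - gL) < (bH*x1 - qHL - gH)*(bL*x1 - qLH - gL)"
      using True assms by (intro prod_strict) auto
    then show False using assms by simp
  next
    case False
    then have "x2 < x1" using ne by simp
    have "(bH*x1 - qHL - gH)*(bL*x1 - qLH - gL) < (bH*x2 - qHL - gH)*(bL*x2 - qLH - gL)"
      using \<open>x2 < x1\<close> assms by (intro prod_strict) auto
    then show False using assms by simp
  qed
qed

lemma x_nonneg:
  fixes x bH bL gH gL qHL qLH :: real
  assumes "bH > 0" "bL > 0" "gH > 0" "gL > 0" "qHL \<ge> 0" "qLH \<ge> 0"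
    and "(bH*x - qHL - gH)*(bL*x - qLH - gL) = qHL*qLH"
  shows "x > 0"
proof (rule ccontr)
  assume "\<not> x > 0"
  then have x: "x \<le> 0" by simp
  have A: "-(bH*x - qHL - gH) > qHL" using x assms by (smt (verit) mult_nonneg_nonpos)
  have B: "-(bL*x - qLH - gL) > qLH" using x assms by (smt (verit) mult_nonneg_nonpos)
  have "qHL*qLH \<le> qHL * (-(bL*x - qLH - gL))" using B assms by (intro mult_left_mono) auto
  also have "\<dots> < (-(bH*x - qHL - gH)) * (-(bL*x - qLH - gL))"
    using A B assms by (intro mult_strict_right_mono) auto
  also have "\<dots> = (bH*x - qHL - gH)*(bL*x - qLH - gL)" by (simp add: algebra_simps)
  finally show False using assms by simp
qed

lemma ratio:
  fixes a b qHL qLH I1 J1 I2 J2 :: real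
  assumes "a*I1 + qLH*J1 = 0" "qHL*I1 + b*J1 = 0"
    "a*I2 + qLH*J2 = 0" "qHL*I2 + b*J2 = 0"
    and nz: "\<not> (a = 0 \<and> b = 0 \<and> qHL = 0 \<and> qLH = 0)"
  shows "I1*J2 = I2*J1"
proof -
  define D where "D = I1*J2 - I2*J1"
  have "a*D = 0" unfolding D_def using assms(1,3)
    by (smt (verit) mult.commute mult.left_commute right_diff_distrib)
  have "b*D = 0" unfolding D_def using assms(2,4)
    by (smt (verit) mult.commute mult.left_commute right_diff_distrib)
  have "qLH*D = 0" unfolding D_def using assms(1,3)
    by (smt (verit) mult.commute mult.left_commute right_diff_distrib)
  have "qHL*D = 0" unfolding D_def using assms(2,4)
    by (smt (verit) mult.commute mult.left_commute right_diff_distrib)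
  then show ?thesis using \<open>a*D = 0\<close> \<open>b*D = 0\<close> \<open>qLH*D = 0\<close> nz unfolding D_def by auto
qed

theorem lemma3:
  fixes \<beta>H \<beta>L \<gamma>H \<gamma>L qHL qLH \<alpha> :: real
    and IHs ILs :: "real \<Rightarrow> real"
  assumes "\<beta>H > 0" "\<beta>L > 0" "\<gamma>H > 0" "\<gamma>L > 0"
    and "\<beta>H / \<gamma>H > \<beta>L / \<gamma>L" and "\<beta>H > \<beta>L"
    and "qHL \<ge> 0" "qLH \<ge> 0"
    and "0 < \<alpha>" "\<alpha> < 1"
    and "\<forall>zS \<in> {0..1}. endemic_eq \<alpha> \<beta>H \<beta>L \<gamma>H \<gamma>L qHL qLH zS (IHs zS) (ILs zS)"
  shows "antimono_on {0..1} IHs \<and> antimono_on {0..1} ILs"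
proof -
  define c where "c z = \<alpha>*z + 1 - z" for z :: real
  define X where "X z = c z * (1 - IHs z - ILs z)" for z
  define a where "a x = \<beta>H*x - qHL - \<gamma>H" for x
  define b where "b x = \<beta>L*x - qLH - \<gamma>L" for x
  have sol: "a (X z) * IHs z + qLH * ILs z = 0 \<and> qHL * IHs z + b (X z) * ILs z = 0
      \<and> IHs z > 0 \<and> ILs z > 0" if "z \<in> {0..1}" for z
  proof -
    have E: "endemic_eq \<alpha> \<beta>H \<beta>L \<gamma>H \<gamma>L qHL qLH z (IHs z) (ILs z)" using assms(11) that by blast
    then show ?thesis
      unfolding endemic_eq_def fH_def fL_def beta_hat_def a_def b_def X_def c_def
      by (auto simp: algebra_simps)
  qed
  have props: "a (X z) \<le> 0 \<and> b (X z) \<le> 0 \<and> a (X z) * b (X z) = qHL*qLH" if "z \<in> {0..1}" for z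
    using key_props[of "a (X z)" "IHs z" qLH "ILs z" qHL "b (X z)"] sol[OF that] assms(7,8) by auto
  have xpos: "X z > 0" if "z \<in> {0..1}" for z
    using x_nonneg[of \<beta>H \<beta>L \<gamma>H \<gamma>L qHL qLH "X z"] props[OF that] assms(1-4,7,8)
    unfolding a_def b_def by auto
  have xeq: "X z = X w" if "z \<in> {0..1}" "w \<in> {0..1}" for z w
    using x_unique[of \<beta>H \<beta>L "X z" qHL \<gamma>H qLH \<gamma>L "X w"] props[OF that(1)] props[OF that(2)] assms(1,2)
    unfolding a_def b_def by auto
  have nz: "\<not> (a (X z) = 0 \<and> b (X z) = 0 \<and> qHL = 0 \<and> qLH = 0)" if "z \<in> {0..1}" for z
  proof
    assume h: "a (X z) = 0 \<and> b (X z) = 0 \<and> qHL = 0 \<and> qLH = 0"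
    then have "\<beta>H * X z = \<gamma>H" "\<beta>L * X z = \<gamma>L" unfolding a_def b_def by auto
    then have "\<beta>H / \<gamma>H = 1 / X z" "\<beta>L / \<gamma>L = 1 / X z"
      using xpos[OF that] assms(1-4) by (auto simp: field_simps)
    then show False using assms(5) by simp
  qed
  have cpos: "c z > 0" if "z \<in> {0..1}" for z
  proof -
    have "c z = 1 - (1-\<alpha>)*z" unfolding c_def by (simp add: algebra_simps)
    moreover have "(1-\<alpha>)*z \<le> (1-\<alpha>)" using that assms(10) by (simp add: mult_left_le)
    ultimately show ?thesis using assms(9) by simp
  qed
  have main: "IHs w \<le> IHs z \<and> ILs w \<le> ILs z" if zw: "z \<in> {0..1}" "w \<in> {0..1}" "z \<le> w" for z w
  proof -
    have xe: "X w = X z" using xeq zw by simp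
    have r: "IHs z * ILs w = IHs w * ILs z"
      using ratio[of "a (X z)" "IHs z" qLH "ILs z" qHL "b (X z)" "IHs w" "ILs w"]
        sol[OF zw(1)] sol[OF zw(2)] nz[OF zw(1)] xe by auto
    have "(1-\<alpha>)*z \<le> (1-\<alpha>)*w" using zw assms(10) by (intro mult_left_mono) auto
    then have cc: "c w \<le> c z" unfolding c_def by (simp add: algebra_simps)
    have Sz: "1 - IHs z - ILs z = X z / c z" using cpos[OF zw(1)] unfolding X_def by simp
    have Sw: "1 - IHs w - ILs w = X z / c w" using cpos[OF zw(2)] xe unfolding X_def by (simp add: field_simps)
    have "X z / c z \<le> X z / c w"
      using cc cpos[OF zw(2)] xpos[OF zw(1)] by (intro divide_left_mono) auto
    then have sum: "IHs w + ILs w \<le> IHs z + ILs z" using Sz Sw by simp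
    have pz: "IHs z > 0" "ILs z > 0" and pw: "IHs w > 0" "ILs w > 0" using sol zw by auto
    show ?thesis
    proof (rule ccontr)
      assume "\<not> ?thesis"
      then consider "IHs z < IHs w" | "ILs z < ILs w" by linarith
      then show False
      proof cases
        case 1
        then have "IHs z * ILs w < IHs w * ILs w" using pw by simp
        then have "IHs w * ILs z < IHs w * ILs w" using r by simp
        then have "ILs z < ILs w" using pw by simp
        then show False using sum 1 by simp
      next
        case 2
        then have "IHs z * ILs z < IHs z * ILs w" using pz by simp
        then have "IHs z * ILs z < IHs w * ILs z" using r by simp
        then have "IHs z < IHs w" using pz by simp
        then show False using sum 2 by simp
      qed
    qed
  qed
  show ?thesis
    by (auto intro!: monotone_onI dest: main)
qed

end
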